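(* Let $(P,Q)$ be a solution of the Cucker–Smale model with velocity control described in the context, let $l\in[N]$ and $[l]=\{1,\dots,l\}$. Then, for $t>0$ (wherever the derivative of $t\mapsto\|P(t)\|_{[l]}$ exists), the following differential inequalities hold: (1) \[ \frac{d}{dt}\|P\|_{[l]}\le-\frac{\kappa\mathcal M l}{N}\psi(\|Q\|_{[l]})\|P\|_{[l]}+\frac{2\kappa M_{G'}(N-l)P^0_M L_{\psi,[l]}}{N}\|Q\|_{[l]}, \] where \[ L_{\psi,[l]}(t):=\sup_{\substack{r,s\ge q_{[l]}(t)\\ r\ne s}}\left|\frac{\psi(r)-\psi(s)}{r-s}\right|<\infty,\qquad q_{[l]}(t):=\min_{i'\in[l],\,j'\notin[l]}|q_{i'}(t)-q_{j'}(t)| \] (when $l=N$ the second term is absent since $N-l=0$); (2) \[ \frac{d}{dt}\|P\|_{[l]}\le-\frac{\kappa\mathcal M l}{N}\psi(\|Q\|_{[l]})\|P\|_{[l]}+\frac{4\kappa P^0_M M_{G'}l(N-l)}{N}\max_{i'\in[l],\,j'\notin[l]}\psi(|q_{i'}-q_{j'}|). \]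
   Context: Let $N\ge1$, $d\ge1$, $\kappa>0$, $[N]=\{1,\dots,N\}$. The velocity control function $G:\mathbb R^d\to\mathbb R^d$ is $G(p)=g(|p|)\,p/|p|$ for $p\ne0$, $G(0)=0$, with $g\in C^1([0,\infty))$, $g(0)=0$, $0<m\le g'\le M$ on every compact interval (constants depending on the interval), and $g$ convex or concave on $(0,\infty)$. The kernel $\psi:(0,\infty)\to(0,\infty)$ is bounded, Lipschitz continuous and nonincreasing. The model is, for $i\in[N]$, $t>0$: \[ \dot q_i=G(p_i),\qquad \dot p_i=\frac{\kappa}{N}\sum_{k=1}^N\psi(|q_k-q_i|)\big(G(p_k)-G(p_i)\big),\qquad (q_i,p_i)(0)=(q_i^0,p_i^0)\in\mathbb R^d\times\mathbb R^d. \] Notation: for $S\subset[N]$, $\|Q\|_S^2=\sum_{i,j\in S}|q_i-q_j|^2$, $\|P\|_S^2=\sum_{i,j\in S}|p_i-p_j|^2$; $P^0_M=\max_i|p_i^0|$, $M_{G'}=\max\{g'(r):0\le r\le P^0_M\}$, $m_{G'}=\min\{g'(r):0\le r\le P^0_M\}$, $\mathcal M=\min\{m_{G'},\,m_{G'}^2/M_{G'}\}$. *)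

theory Defs
  imports "HOL-Analysis.Analysis"
begin

definition velG :: "(real \<Rightarrow> real) \<Rightarrow> 'a::real_normed_vector \<Rightarrow> 'a" where
  "velG g p = (if p = 0 then 0 else (g (norm p) / norm p) *\<^sub>R p)"

definition grpnorm :: "nat set \<Rightarrow> (nat \<Rightarrow> 'a::real_normed_vector) \<Rightarrow> real" where
  "grpnorm S x = sqrt (\<Sum>i\<in>S. \<Sum>j\<in>S. (norm (x i - x j))^2)"

definition qmin :: "nat \<Rightarrow> nat \<Rightarrow> (nat \<Rightarrow> 'a::real_normed_vector) \<Rightarrow> real" where
  "qmin N l x = Min {norm (x i - x j) | i j. i \<in> {1..l} \<and> j \<in> {1..N} - {1..l}}"

definition psimax :: "(real \<Rightarrow> real) \<Rightarrow> nat \<Rightarrow> nat \<Rightarrow> (nat \<Rightarrow> 'a::real_normed_vector) \<Rightarrow> real" where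
  "psimax \<psi> N l x = Max {\<psi> (norm (x i - x j)) | i j. i \<in> {1..l} \<and> j \<in> {1..N} - {1..l}}"

definition dquot :: "(real \<Rightarrow> real) \<Rightarrow> real \<Rightarrow> real set" where
  "dquot \<psi> a = {\<bar>(\<psi> r - \<psi> s) / (r - s)\<bar> | r s. a \<le> r \<and> a \<le> s \<and> r \<noteq> s}"

definition Lpsi :: "(real \<Rightarrow> real) \<Rightarrow> real \<Rightarrow> real" where
  "Lpsi \<psi> a = Sup (dquot \<psi> a)"

end

theory Submission
  imports Defs
begin


lemma g_mvt:
  fixes g g' :: "real \<Rightarrow> real"
  assumes gd: "\<forall>r\<ge>0. (g has_real_derivative g' r) (at r within {0..})"
    and "0 \<le> a" "a \<le> b"
  shows "\<exists>x\<in>{a..b}. g b - g a = g' x * (b - a)"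
proof -
  have "\<exists>x\<in>{a..b}. g b - g a = (\<lambda>h. g' x * h) (b - a)"
  proof (rule mvt_very_simple[OF \<open>a \<le> b\<close>])
    fix x assume "a \<le> x" "x \<le> b"
    then have "(g has_real_derivative g' x) (at x within {0..})" using gd assms by auto
    then have "(g has_real_derivative g' x) (at x within {a..b})"
      by (rule has_field_derivative_subset) (use assms in auto)
    then show "(g has_derivative (\<lambda>h. g' x * h)) (at x within {a..b})"
      by (simp add: has_field_derivative_def)
  qed
  then show ?thesis by simp
qed

lemma g_bounds:
  fixes g g' :: "real \<Rightarrow> real"
  assumes gd: "\<forall>r\<ge>0. (g has_real_derivative g' r) (at r within {0..})"
    and gb: "\<forall>r\<in>{0..B}. m \<le> g' r \<and> g' r \<le> M"
    and "0 \<le> a" "a \<le> b" "b \<le> B"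
  shows "m * (b - a) \<le> g b - g a \<and> g b - g a \<le> M * (b - a)"
proof -
  obtain x where x: "x \<in> {a..b}" "g b - g a = g' x * (b - a)"
    using g_mvt[OF gd assms(3,4)] by blast
  have "m \<le> g' x" "g' x \<le> M" using gb x assms by auto
  then show ?thesis using x assms by (auto intro: mult_right_mono)
qed

lemma norm_velG:
  assumes "g 0 = 0"
  shows "norm (velG g x) = \<bar>g (norm x)\<bar>"
  using assms by (auto simp: velG_def)

lemma inner_velG:
  fixes x y :: "'a::real_inner"
  shows "inner y (velG g x) = (if x = 0 then 0 else g (norm x) / norm x * inner y x)"
  by (auto simp: velG_def)

lemma velG_mono:
  fixes x y :: "'a::real_inner" and g :: "real \<Rightarrow> real"
  assumes g0: "g 0 = 0" and m: "m \<ge> 0"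
    and hg: "\<And>a b. 0 \<le> a \<Longrightarrow> a \<le> b \<Longrightarrow> b \<le> B \<Longrightarrow> m * (b - a) \<le> g b - g a"
    and x: "norm x \<le> B" and y: "norm y \<le> B"
  shows "m * (norm (x - y))^2 \<le> inner (x - y) (velG g x - velG g y)"
proof -
  have gl: "m * norm z \<le> g (norm z)" if "norm z \<le> B" for z :: 'a
    using hg[of 0 "norm z"] that g0 by simp
  show ?thesis
  proof (cases "x = 0")
    case True
    then show ?thesis using gl[OF y]
      by (simp add: velG_def inner_diff power2_norm_eq_inner[symmetric] power2_eq_square)

  next
    case xn: False
    show ?thesis
    proof (cases "y = 0")
      case True
      then show ?thesis using gl[OF x]
        by (simp add: velG_def inner_diff power2_norm_eq_inner[symmetric] power2_eq_square)

    next
      case yn: False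
      define a where "a = norm x"
      define b where "b = norm y"
      define c where "c = inner x y"
      define \<alpha> where "\<alpha> = g a / a"
      define \<beta> where "\<beta> = g b / b"
      have a0: "a > 0" and b0: "b > 0" using xn yn by (auto simp: a_def b_def)
      have ga: "g a = \<alpha> * a" and gb: "g b = \<beta> * b" using a0 b0 by (auto simp: \<alpha>_def \<beta>_def)
      have am: "\<alpha> \<ge> m" using gl[OF x] a0 by (simp add: \<alpha>_def a_def field_simps)
      have bm: "\<beta> \<ge> m" using gl[OF y] b0 by (simp add: \<beta>_def b_def field_simps)
      have cab: "c \<le> a * b" unfolding a_def b_def c_def by (rule norm_cauchy_schwarz)
      have key: "m * (a - b)^2 \<le> (\<alpha> * a - \<beta> * b) * (a - b)"
      proof (cases "a \<le> b")
        case True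
        have "m * (b - a) \<le> \<beta> * b - \<alpha> * a" using hg[of a b] True a0 y ga gb by (simp add: b_def)
        then have "m * (b - a) * (b - a) \<le> (\<beta> * b - \<alpha> * a) * (b - a)"
          using True by (intro mult_right_mono) auto
        then show ?thesis by (simp add: power2_eq_square algebra_simps)
      next
        case False
        have "m * (a - b) \<le> \<alpha> * a - \<beta> * b" using hg[of b a] False b0 x ga gb by (simp add: a_def)
        then have "m * (a - b) * (a - b) \<le> (\<alpha> * a - \<beta> * b) * (a - b)"
          using False by (intro mult_right_mono) auto
        then show ?thesis by (simp add: power2_eq_square algebra_simps)
      qed
      have c2: "(\<alpha> + \<beta> - 2 * m) * c \<le> (\<alpha> + \<beta> - 2 * m) * (a * b)"
        using am bm cab by (intro mult_left_mono) auto
      have lhs: "inner (x - y) (velG g x - velG g y) = \<alpha> * a^2 - \<alpha> * c - \<beta> * c + \<beta> * b^2"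
        using xn yn by (simp add: velG_def inner_diff inner_commute \<alpha>_def \<beta>_def a_def b_def c_def
            power2_norm_eq_inner algebra_simps)
      have rhs: "(norm (x - y))^2 = a^2 + b^2 - 2 * c"
        by (simp add: power2_norm_eq_inner inner_diff inner_commute a_def b_def c_def algebra_simps)
      show ?thesis unfolding lhs rhs using key c2
        by (simp add: power2_eq_square algebra_simps)
    qed
  qed
qed



lemma swap_identity:
  fixes p X :: "nat \<Rightarrow> 'a::real_inner"
  shows "(\<Sum>i\<in>I. \<Sum>j\<in>I. inner (p i - p j) (X i - X j)) = 2 * (\<Sum>i\<in>I. \<Sum>j\<in>I. inner (p i - p j) (X i))"
proof -
  have "(\<Sum>i\<in>I. \<Sum>j\<in>I. inner (p i - p j) (X j)) = (\<Sum>j\<in>I. \<Sum>i\<in>I. inner (p i - p j) (X j))"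
    by (rule sum.swap)
  also have "\<dots> = - (\<Sum>i\<in>I. \<Sum>j\<in>I. inner (p i - p j) (X i))"
    by (simp add: sum_negf[symmetric] inner_diff_left)
  finally have e: "(\<Sum>i\<in>I. \<Sum>j\<in>I. inner (p i - p j) (X j)) = - (\<Sum>i\<in>I. \<Sum>j\<in>I. inner (p i - p j) (X i))" .
  have "(\<Sum>i\<in>I. \<Sum>j\<in>I. inner (p i - p j) (X i - X j)) =
     (\<Sum>i\<in>I. \<Sum>j\<in>I. inner (p i - p j) (X i)) - (\<Sum>i\<in>I. \<Sum>j\<in>I. inner (p i - p j) (X j))"
    by (simp add: inner_diff_right sum_subtractf)
  then show ?thesis using e by simp
qed

lemma internal_bound:
  fixes p G :: "nat \<Rightarrow> 'a::real_inner" and w :: "nat \<Rightarrow> nat \<Rightarrow> real"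
  assumes fin: "finite I"
    and wsym: "\<forall>i\<in>I. \<forall>k\<in>I. w i k = w k i"
    and wlow: "\<forall>i\<in>I. \<forall>k\<in>I. w0 \<le> w i k"
    and w0: "0 \<le> w0" and m: "0 \<le> m"
    and mono: "\<forall>i\<in>I. \<forall>k\<in>I. m * (norm (p i - p k))^2 \<le> inner (p i - p k) (G i - G k)"
  shows "(\<Sum>i\<in>I. \<Sum>j\<in>I. inner (p i - p j)
            ((\<Sum>k\<in>I. w i k *\<^sub>R (G k - G i)) - (\<Sum>k\<in>I. w j k *\<^sub>R (G k - G j))))
         \<le> - (real (card I) * w0 * m) * (\<Sum>i\<in>I. \<Sum>j\<in>I. (norm (p i - p j))^2)"
proof -
  define F where "F i = (\<Sum>k\<in>I. w i k *\<^sub>R (G k - G i))" for i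
  define A where "A = (\<Sum>i\<in>I. inner (p i) (F i))"
  define S where "S = (\<Sum>i\<in>I. \<Sum>j\<in>I. (norm (p i - p j))^2)"
  have sumF: "(\<Sum>i\<in>I. F i) = 0"
  proof -
    have "(\<Sum>i\<in>I. \<Sum>k\<in>I. w i k *\<^sub>R G k) = (\<Sum>k\<in>I. \<Sum>i\<in>I. w i k *\<^sub>R G k)"
      by (rule sum.swap)
    also have "\<dots> = (\<Sum>i\<in>I. \<Sum>k\<in>I. w i k *\<^sub>R G i)"
      using wsym by (intro sum.cong refl) auto
    finally show ?thesis
      by (simp add: F_def scaleR_diff_right sum_subtractf)
  qed
  have step1: "(\<Sum>i\<in>I. \<Sum>j\<in>I. inner (p i - p j) (F i)) = real (card I) * A - inner (\<Sum>j\<in>I. p j) (\<Sum>i\<in>I. F i)"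
    by (simp add: inner_diff_left sum_subtractf A_def inner_sum_left inner_sum_right sum_distrib_left)
  have A1: "A = (\<Sum>i\<in>I. \<Sum>k\<in>I. w i k * inner (p i) (G k - G i))"
    by (simp add: A_def F_def inner_sum_right)
  also have "\<dots> = (\<Sum>k\<in>I. \<Sum>i\<in>I. w i k * inner (p i) (G k - G i))"
    by (rule sum.swap)
  also have "\<dots> = (\<Sum>i\<in>I. \<Sum>k\<in>I. w i k * inner (p k) (G i - G k))"
    using wsym by (intro sum.cong refl) auto
  finally have A2: "A = (\<Sum>i\<in>I. \<Sum>k\<in>I. w i k * inner (p k) (G i - G k))" .
  have "2 * A = (\<Sum>i\<in>I. \<Sum>k\<in>I. w i k * inner (p i) (G k - G i)) + (\<Sum>i\<in>I. \<Sum>k\<in>I. w i k * inner (p k) (G i - G k))"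
    using A1 A2 by simp
  also have "\<dots> = - (\<Sum>i\<in>I. \<Sum>k\<in>I. w i k * inner (p i - p k) (G i - G k))"
    by (simp add: sum.distrib[symmetric] sum_negf[symmetric] inner_diff_left inner_diff_right algebra_simps)
  also have "\<dots> \<le> - (\<Sum>i\<in>I. \<Sum>k\<in>I. w0 * (m * (norm (p i - p k))^2))"
  proof -
    have "(\<Sum>i\<in>I. \<Sum>k\<in>I. w0 * (m * (norm (p i - p k))^2)) \<le> (\<Sum>i\<in>I. \<Sum>k\<in>I. w i k * inner (p i - p k) (G i - G k))"
    proof (intro sum_mono)
      fix i k assume ik: "i \<in> I" "k \<in> I"
      have "w0 * (m * (norm (p i - p k))^2) \<le> w i k * (m * (norm (p i - p k))^2)"
        using wlow ik m by (intro mult_right_mono) auto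
      also have "\<dots> \<le> w i k * inner (p i - p k) (G i - G k)"
        using mono ik wlow w0 by (intro mult_left_mono) force+
      finally show "w0 * (m * (norm (p i - p k))^2) \<le> w i k * inner (p i - p k) (G i - G k)" .
    qed
    then show ?thesis by simp
  qed
  also have "\<dots> = - (w0 * m * S)"
    by (simp add: S_def sum_distrib_left mult.assoc)
  finally have A3: "2 * A \<le> - (w0 * m * S)" .
  have "(\<Sum>i\<in>I. \<Sum>j\<in>I. inner (p i - p j) (F i - F j)) = 2 * (real (card I) * A)"
    using swap_identity[of p F I] step1 sumF by simp
  also have "\<dots> = real (card I) * (2 * A)" by simp
  also have "\<dots> \<le> real (card I) * (- (w0 * m * S))"
    using A3 by (intro mult_left_mono) auto
  finally show ?thesis by (simp add: F_def S_def)
qed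



lemma mul_abs_inner:
  fixes a b :: "'a::real_inner"
  shows "w * inner a b \<le> \<bar>w\<bar> * (norm a * norm b)"
proof -
  have "\<bar>w\<bar> * \<bar>inner a b\<bar> \<le> \<bar>w\<bar> * (norm a * norm b)"
    by (rule mult_left_mono[OF Cauchy_Schwarz_ineq2]) simp
  moreover have "w * inner a b \<le> \<bar>w\<bar> * \<bar>inner a b\<bar>"
    by (metis abs_ge_self abs_mult)
  ultimately show ?thesis by linarith
qed

lemma ext_pair1:
  fixes pi pj Gi Gj :: "'a::real_inner" and G :: "nat \<Rightarrow> 'a"
  assumes fin: "finite E" and wj: "\<forall>k\<in>E. 0 \<le> wj k"
    and mon: "0 \<le> inner (pi - pj) (Gi - Gj)"
    and K: "\<forall>k\<in>E. \<bar>wi k - wj k\<bar> * norm (G k - Gi) \<le> K"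
  shows "inner (pi - pj) ((\<Sum>k\<in>E. wi k *\<^sub>R (G k - Gi)) - (\<Sum>k\<in>E. wj k *\<^sub>R (G k - Gj)))
         \<le> real (card E) * K * norm (pi - pj)"
proof -
  have "inner (pi - pj) ((\<Sum>k\<in>E. wi k *\<^sub>R (G k - Gi)) - (\<Sum>k\<in>E. wj k *\<^sub>R (G k - Gj)))
     = (\<Sum>k\<in>E. (wi k - wj k) * inner (pi - pj) (G k - Gi) - wj k * inner (pi - pj) (Gi - Gj))"
  proof -
    have eq: "wi k *\<^sub>R (G k - Gi) - wj k *\<^sub>R (G k - Gj) = (wi k - wj k) *\<^sub>R (G k - Gi) - wj k *\<^sub>R (Gi - Gj)" for k
      by (simp add: algebra_simps)
    have "(\<Sum>k\<in>E. wi k *\<^sub>R (G k - Gi)) - (\<Sum>k\<in>E. wj k *\<^sub>R (G k - Gj))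
        = (\<Sum>k\<in>E. (wi k - wj k) *\<^sub>R (G k - Gi) - wj k *\<^sub>R (Gi - Gj))"
      by (simp add: sum_subtractf[symmetric] eq)
    then show ?thesis by (simp add: inner_sum_right inner_diff_right)
  qed
  also have "\<dots> \<le> (\<Sum>k\<in>E. K * norm (pi - pj))"
  proof (rule sum_mono)
    fix k assume k: "k \<in> E"
    have a: "wj k * inner (pi - pj) (Gi - Gj) \<ge> 0" using wj k mon by simp
    have "(wi k - wj k) * inner (pi - pj) (G k - Gi) \<le> \<bar>wi k - wj k\<bar> * (norm (pi - pj) * norm (G k - Gi))"
      by (rule mul_abs_inner)
    also have "\<dots> = (\<bar>wi k - wj k\<bar> * norm (G k - Gi)) * norm (pi - pj)" by simp
    also have "\<dots> \<le> K * norm (pi - pj)" using K k by (intro mult_right_mono) auto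
    finally show "(wi k - wj k) * inner (pi - pj) (G k - Gi) - wj k * inner (pi - pj) (Gi - Gj) \<le> K * norm (pi - pj)"
      using a by linarith
  qed
  also have "\<dots> = real (card E) * K * norm (pi - pj)" by simp
  finally show ?thesis .
qed

lemma ext_pair2:
  fixes pi pj Gi :: "'a::real_inner" and G :: "nat \<Rightarrow> 'a"
  assumes fin: "finite E"
    and K: "\<forall>k\<in>E. \<bar>wi k\<bar> * norm (G k - Gi) \<le> K"
  shows "inner (pi - pj) (\<Sum>k\<in>E. wi k *\<^sub>R (G k - Gi)) \<le> real (card E) * K * norm (pi - pj)"
proof -
  have "inner (pi - pj) (\<Sum>k\<in>E. wi k *\<^sub>R (G k - Gi)) = (\<Sum>k\<in>E. wi k * inner (pi - pj) (G k - Gi))"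
    by (simp add: inner_sum_right)
  also have "\<dots> \<le> (\<Sum>k\<in>E. K * norm (pi - pj))"
  proof (rule sum_mono)
    fix k assume k: "k \<in> E"
    have "wi k * inner (pi - pj) (G k - Gi) \<le> \<bar>wi k\<bar> * (norm (pi - pj) * norm (G k - Gi))"
      by (rule mul_abs_inner)
    also have "\<dots> = (\<bar>wi k\<bar> * norm (G k - Gi)) * norm (pi - pj)" by simp
    also have "\<dots> \<le> K * norm (pi - pj)" using K k by (intro mult_right_mono) auto
    finally show "wi k * inner (pi - pj) (G k - Gi) \<le> K * norm (pi - pj)" .
  qed
  also have "\<dots> = real (card E) * K * norm (pi - pj)" by simp
  finally show ?thesis .
qed

lemma grpnorm_L2:
  assumes "finite I" shows "grpnorm I x = L2_set (\<lambda>(i,j). norm (x i - x j)) (I \<times> I)"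
  unfolding grpnorm_def L2_set_def
  by (simp add: sum.cartesian_product case_prod_unfold)

lemma cs_double:
  fixes p q :: "nat \<Rightarrow> 'a::real_normed_vector"
  assumes "finite I"
  shows "(\<Sum>i\<in>I. \<Sum>j\<in>I. norm (p i - p j) * norm (q i - q j)) \<le> grpnorm I p * grpnorm I q"
proof -
  have "(\<Sum>i\<in>I. \<Sum>j\<in>I. norm (p i - p j) * norm (q i - q j))
      = (\<Sum>x\<in>I \<times> I. \<bar>(\<lambda>(i,j). norm (p i - p j)) x\<bar> * \<bar>(\<lambda>(i,j). norm (q i - q j)) x\<bar>)"
    by (simp add: sum.cartesian_product case_prod_unfold)
  also have "\<dots> \<le> grpnorm I p * grpnorm I q"
    unfolding grpnorm_L2[OF assms] by (rule L2_set_mult_ineq)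
  finally show ?thesis .
qed

lemma sum_norm_double:
  fixes p :: "nat \<Rightarrow> 'a::real_normed_vector"
  assumes "finite I"
  shows "(\<Sum>i\<in>I. \<Sum>j\<in>I. norm (p i - p j)) \<le> real (card I) * grpnorm I p"
proof -
  have "(\<Sum>i\<in>I. \<Sum>j\<in>I. norm (p i - p j))
      = (\<Sum>x\<in>I \<times> I. \<bar>(\<lambda>(i,j). norm (p i - p j)) x\<bar> * \<bar>(\<lambda>_. 1::real) x\<bar>)"
    by (simp add: sum.cartesian_product case_prod_unfold)
  also have "\<dots> \<le> grpnorm I p * L2_set (\<lambda>_. 1::real) (I \<times> I)"
    unfolding grpnorm_L2[OF assms] by (rule L2_set_mult_ineq)
  also have "L2_set (\<lambda>_. 1::real) (I \<times> I) = real (card I)"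
    by (simp add: L2_set_def card_cartesian_product)
  finally show ?thesis by (simp add: mult.commute)
qed



lemma psi_facts:
  fixes \<psi> :: "real \<Rightarrow> real"
  assumes psi_pos: "\<forall>r>0. \<psi> r > 0"
    and psi_mono: "\<forall>r s. 0 < r \<and> r \<le> s \<longrightarrow> \<psi> s \<le> \<psi> r"
    and psi_0: "(\<psi> \<longlongrightarrow> \<psi> 0) (at_right 0)"
  shows "\<forall>r\<ge>0. \<psi> r \<ge> 0" and "\<forall>r s. 0 \<le> r \<and> r \<le> s \<longrightarrow> \<psi> s \<le> \<psi> r"
proof -
  have "0 \<le> \<psi> 0"
  proof (rule tendsto_lowerbound[OF psi_0])
    show "\<forall>\<^sub>F x in at_right 0. 0 \<le> \<psi> x"
      using eventually_at_right_less[of "0::real"] by eventually_elim (use psi_pos in \<open>auto simp: less_imp_le\<close>)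
  qed (simp add: trivial_limit_at_right_real)
  then show "\<forall>r\<ge>0. \<psi> r \<ge> 0" using psi_pos by (metis less_eq_real_def)
  show "\<forall>r s. 0 \<le> r \<and> r \<le> s \<longrightarrow> \<psi> s \<le> \<psi> r"
  proof (intro allI impI)
    fix r s :: real assume rs: "0 \<le> r \<and> r \<le> s"
    show "\<psi> s \<le> \<psi> r"
    proof (cases "r > 0")
      case True then show ?thesis using psi_mono rs by auto
    next
      case False
      then have r0: "r = 0" using rs by auto
      show ?thesis
      proof (cases "s > 0")
        case True
        have "\<psi> s \<le> \<psi> 0"
        proof (rule tendsto_lowerbound[OF psi_0])
          show "\<forall>\<^sub>F x in at_right 0. \<psi> s \<le> \<psi> x"
            using eventually_at_right_real[OF True] by eventually_elim (use psi_mono in auto)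
        qed (simp add: trivial_limit_at_right_real)
        then show ?thesis using r0 by simp
      next
        case False then show ?thesis using rs r0 by auto
      qed
    qed
  qed
qed

lemma psi_lip0:
  fixes \<psi> :: "real \<Rightarrow> real"
  assumes psi_lip: "\<exists>L. \<forall>r>0. \<forall>s>0. \<bar>\<psi> r - \<psi> s\<bar> \<le> L * \<bar>r - s\<bar>"
    and psi_0: "(\<psi> \<longlongrightarrow> \<psi> 0) (at_right 0)"
  shows "\<exists>L\<ge>0. \<forall>r\<ge>0. \<forall>s\<ge>0. \<bar>\<psi> r - \<psi> s\<bar> \<le> L * \<bar>r - s\<bar>"
proof -
  obtain L where L: "\<forall>r>0. \<forall>s>0. \<bar>\<psi> r - \<psi> s\<bar> \<le> L * \<bar>r - s\<bar>" using psi_lip by blast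
  define L' where "L' = max L 0"
  have L': "\<forall>r>0. \<forall>s>0. \<bar>\<psi> r - \<psi> s\<bar> \<le> L' * \<bar>r - s\<bar>"
  proof (intro allI impI)
    fix r s :: real assume "r > 0" "s > 0"
    then have "\<bar>\<psi> r - \<psi> s\<bar> \<le> L * \<bar>r - s\<bar>" using L by auto
    also have "\<dots> \<le> L' * \<bar>r - s\<bar>" unfolding L'_def by (intro mult_right_mono) auto
    finally show "\<bar>\<psi> r - \<psi> s\<bar> \<le> L' * \<bar>r - s\<bar>" .
  qed
  have one0: "\<bar>\<psi> r - \<psi> 0\<bar> \<le> L' * \<bar>r - 0\<bar>" if r: "r > 0" for r
  proof (rule tendsto_le[OF trivial_limit_at_right_real])
    show "((\<lambda>s. L' * \<bar>r - s\<bar>) \<longlongrightarrow> L' * \<bar>r - 0\<bar>) (at_right 0)"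
      by (intro tendsto_intros tendsto_ident_at)
    show "((\<lambda>s. \<bar>\<psi> r - \<psi> s\<bar>) \<longlongrightarrow> \<bar>\<psi> r - \<psi> 0\<bar>) (at_right 0)"
      by (intro tendsto_intros psi_0)
    show "\<forall>\<^sub>F s in at_right 0. \<bar>\<psi> r - \<psi> s\<bar> \<le> L' * \<bar>r - s\<bar>"
      using eventually_at_right_less[of "0::real"] by eventually_elim (use L' r in auto)
  qed
  have "\<forall>r\<ge>0. \<forall>s\<ge>0. \<bar>\<psi> r - \<psi> s\<bar> \<le> L' * \<bar>r - s\<bar>"
  proof (intro allI impI)
    fix r s :: real assume r: "r \<ge> 0" and s: "s \<ge> 0"
    show "\<bar>\<psi> r - \<psi> s\<bar> \<le> L' * \<bar>r - s\<bar>"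
    proof (cases "r = 0")
      case True
      then show ?thesis
      proof (cases "s = 0")
        case False
        then have "s > 0" using s by auto
        from one0[OF this] True show ?thesis by (simp add: abs_minus_commute)
      qed simp
    next
      case rn: False
      then have r0: "r > 0" using r by auto
      show ?thesis
      proof (cases "s = 0")
        case True then show ?thesis using one0[OF r0] by simp
      next
        case False then show ?thesis using L' r0 s by auto
      qed
    qed
  qed
  then show ?thesis unfolding L'_def by (intro exI[of _ "max L 0"]) auto
qed

lemma Lpsi_facts:
  fixes \<psi> :: "real \<Rightarrow> real"
  assumes L: "L \<ge> 0" "\<forall>r\<ge>0. \<forall>s\<ge>0. \<bar>\<psi> r - \<psi> s\<bar> \<le> L * \<bar>r - s\<bar>"
    and a: "a \<ge> 0"
  shows "bdd_above (dquot \<psi> a)" and "Lpsi \<psi> a \<ge> 0"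
    and "\<And>r s. a \<le> r \<Longrightarrow> a \<le> s \<Longrightarrow> \<bar>\<psi> r - \<psi> s\<bar> \<le> Lpsi \<psi> a * \<bar>r - s\<bar>"
proof -
  have ub: "x \<le> L" if xin: "x \<in> dquot \<psi> a" for x
  proof -
    obtain r s where rs: "x = \<bar>(\<psi> r - \<psi> s) / (r - s)\<bar>" "a \<le> r" "a \<le> s" "r \<noteq> s"
      using xin unfolding dquot_def by blast
    have "\<bar>\<psi> r - \<psi> s\<bar> \<le> L * \<bar>r - s\<bar>" using L rs a by auto
    then show ?thesis using rs by (simp add: abs_divide divide_le_eq)
  qed
  show bdd: "bdd_above (dquot \<psi> a)" by (rule bdd_aboveI[where M=L]) (rule ub)
  have mem: "\<bar>(\<psi> a - \<psi> (a+1)) / (a - (a+1))\<bar> \<in> dquot \<psi> a"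
    unfolding dquot_def by (rule CollectI, intro exI[of _ a] exI[of _ "a+1"]) auto
  have "0 \<le> \<bar>(\<psi> a - \<psi> (a+1)) / (a - (a+1))\<bar>" by simp
  also have "\<dots> \<le> Lpsi \<psi> a" unfolding Lpsi_def by (rule cSup_upper[OF mem bdd])
  finally show L0: "Lpsi \<psi> a \<ge> 0" .
  fix r s assume r: "a \<le> r" and s: "a \<le> s"
  show "\<bar>\<psi> r - \<psi> s\<bar> \<le> Lpsi \<psi> a * \<bar>r - s\<bar>"
  proof (cases "r = s")
    case False
    have m: "\<bar>(\<psi> r - \<psi> s) / (r - s)\<bar> \<in> dquot \<psi> a"
      unfolding dquot_def using r s False by blast
    have "\<bar>(\<psi> r - \<psi> s) / (r - s)\<bar> \<le> Lpsi \<psi> a" unfolding Lpsi_def by (rule cSup_upper[OF m bdd])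
    then show ?thesis using False by (simp add: abs_divide divide_le_eq)
  qed simp
qed

lemma velG_max:
  fixes x y :: "'a::real_inner"
  assumes g0: "g 0 = 0" and gmono: "\<forall>a b. 0 \<le> a \<and> a \<le> b \<longrightarrow> g a \<le> g b"
    and xy: "norm y \<le> norm x"
  shows "inner x (velG g y - velG g x) \<le> 0"
proof -
  have "g 0 \<le> g (norm y)" using gmono by simp
  then have gnn: "g (norm y) \<ge> 0" using g0 by simp
  have "inner x (velG g y) \<le> norm x * norm (velG g y)" by (rule norm_cauchy_schwarz)
  also have "norm (velG g y) = g (norm y)" using gnn g0 by (simp add: velG_def)
  also have "norm x * g (norm y) \<le> norm x * g (norm x)"
    using gmono xy by (intro mult_left_mono) auto
  also have "\<dots> = inner x (velG g x)"
    by (auto simp: velG_def power2_norm_eq_inner[symmetric] power2_eq_square)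
  finally show ?thesis by (simp add: inner_diff_right)
qed



lemma deriv_norm_sq:
  fixes f :: "real \<Rightarrow> 'a::real_inner"
  assumes "(f has_vector_derivative f') (at t)"
  shows "((\<lambda>s. (norm (f s))^2) has_real_derivative (2 * inner (f t) f')) (at t)"
proof -
  have d: "(f has_derivative (\<lambda>h. h *\<^sub>R f')) (at t)"
    using assms by (simp add: has_vector_derivative_def)
  have "((\<lambda>s. inner (f s) (f s)) has_derivative
        (\<lambda>h. inner (f t) (h *\<^sub>R f') + inner (h *\<^sub>R f') (f t))) (at t)"
    by (rule has_derivative_inner[OF d d])
  moreover have "(\<lambda>h. inner (f t) (h *\<^sub>R f') + inner (h *\<^sub>R f') (f t)) = (*) (2 * inner (f t) f')"
    by (auto simp: inner_commute algebra_simps)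
  ultimately show ?thesis
    by (simp add: has_field_derivative_def power2_norm_eq_inner)
qed



lemma max_principle:
  fixes p q :: "nat \<Rightarrow> real \<Rightarrow> 'a::real_inner" and g \<psi> :: "real \<Rightarrow> real"
  assumes N1: "N \<ge> 1" and kappa: "\<kappa> > 0"
    and g0: "g 0 = 0" and gmono: "\<forall>a b. 0 \<le> a \<and> a \<le> b \<longrightarrow> g a \<le> g b"
    and psi_nn: "\<forall>r\<ge>0. \<psi> r \<ge> 0"
    and p_cont: "\<forall>i\<in>{1..N}. continuous_on {0..} (p i)"
    and p_ode: "\<forall>i\<in>{1..N}. \<forall>t>0. (p i has_vector_derivative
         (\<kappa> / real N) *\<^sub>R (\<Sum>k\<in>{1..N}. \<psi> (norm (q k t - q i t)) *\<^sub>R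
            (velG g (p k t) - velG g (p i t)))) (at t)"
    and R: "\<forall>i\<in>{1..N}. norm (p i 0) \<le> R"
  shows "\<forall>t\<ge>0. \<forall>i\<in>{1..N}. norm (p i t) \<le> R"
proof (rule ccontr)
  assume "\<not> ?thesis"
  then obtain t1 i0 where t1: "t1 \<ge> 0" and i0: "i0 \<in> {1..N}" and big: "norm (p i0 t1) > R"
    by (auto simp: not_le)
  have R0: "R \<ge> 0" using R i0 by (meson norm_ge_zero order_trans)
  define n where "n = norm (p i0 t1)"
  have nR: "n^2 > R^2" using big R0 unfolding n_def by (simp add: power_strict_mono)
  define \<epsilon> where "\<epsilon> = (n^2 - R^2) / (2 * (1 + t1))"
  have eps: "\<epsilon> > 0" using nR t1 by (simp add: \<epsilon>_def)
  define f where "f j t = (norm (p j t))^2 - R^2 - \<epsilon> * (1 + t)" for j t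
  have fi0: "f i0 t1 > 0"
  proof -
    have "\<epsilon> * (1 + t1) = (n^2 - R^2) / 2" using t1 by (simp add: \<epsilon>_def field_simps)
    then show ?thesis using nR by (simp add: f_def n_def)
  qed
  define Z where "Z = {t \<in> {0..t1}. \<exists>j\<in>{1..N}. 0 \<le> f j t}"
  have Zeq: "Z = (\<Union>j\<in>{1..N}. {t \<in> {0..t1}. (\<lambda>_. 0) t \<le> f j t})" by (auto simp: Z_def)
  have fcont: "continuous_on {0..t1} (f j)" if "j \<in> {1..N}" for j
  proof -
    have "continuous_on {0..} (p j)" using p_cont that by blast
    then have "continuous_on {0..t1} (p j)" by (rule continuous_on_subset) auto
    then show ?thesis unfolding f_def by (intro continuous_intros)
  qed
  have closedZ: "closed Z" unfolding Zeq
    by (intro closed_UN finite_atLeastAtMost ballI continuous_on_closed_Collect_le continuous_on_const fcont closed_atLeastAtMost)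
  have Zne: "Z \<noteq> {}" using t1 i0 fi0 by (auto simp: Z_def intro!: exI[of _ t1] less_imp_le)
  have Zbdd: "bdd_below Z" by (rule bdd_belowI[where m=0]) (auto simp: Z_def)
  define T where "T = Inf Z"
  have TZ: "T \<in> Z" unfolding T_def by (rule closed_contains_Inf[OF Zne Zbdd closedZ])
  then obtain j where j: "j \<in> {1..N}" "0 \<le> f j T" and T0: "0 \<le> T" "T \<le> t1" by (auto simp: Z_def)
  obtain i where i: "i \<in> {1..N}" and imax: "\<forall>k\<in>{1..N}. norm (p k T) \<le> norm (p i T)"
  proof -
    have "Max ((\<lambda>k. norm (p k T)) ` {1..N}) \<in> (\<lambda>k. norm (p k T)) ` {1..N}"
      using N1 by (intro Max_in) auto
    then obtain i where "i \<in> {1..N}" "norm (p i T) = Max ((\<lambda>k. norm (p k T)) ` {1..N})" by auto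
    then show ?thesis using that by auto
  qed
  have "f j T \<le> f i T" using imax j by (auto simp: f_def intro: power_mono)
  then have fiT: "0 \<le> f i T" using j by simp
  have Tpos: "T > 0"
  proof (rule ccontr)
    assume "\<not> T > 0"
    then have "T = 0" using T0 by simp
    moreover have "(norm (p i 0))^2 \<le> R^2" using R i by (intro power_mono) auto
    ultimately have "f i T < 0" using eps by (simp add: f_def)
    then show False using fiT by simp
  qed
  define V where "V = (\<kappa> / real N) *\<^sub>R (\<Sum>k\<in>{1..N}. \<psi> (norm (q k T - q i T)) *\<^sub>R
            (velG g (p k T) - velG g (p i T)))"
  have pd: "(p i has_vector_derivative V) (at T)" using p_ode i Tpos by (simp add: V_def)
  have fd: "(f i has_real_derivative (2 * inner (p i T) V - \<epsilon>)) (at T)"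
  proof -
    have "((\<lambda>s. (norm (p i s))^2 - R^2 - \<epsilon> * (1 + s)) has_real_derivative (2 * inner (p i T) V - 0 - \<epsilon> * (0 + 1))) (at T)"
    proof -
      have e: "((\<lambda>s. \<epsilon> * (1 + s)) has_real_derivative \<epsilon> * (0 + 1)) (at T)"
        by (intro DERIV_cmult DERIV_add DERIV_const DERIV_ident)
      show ?thesis by (intro DERIV_diff deriv_norm_sq[OF pd] DERIV_const e)
    qed
    then show ?thesis by (simp add: f_def[abs_def])
  qed
  have Vneg: "inner (p i T) V \<le> 0"
  proof -
    have "inner (p i T) V = (\<kappa> / real N) * (\<Sum>k\<in>{1..N}. \<psi> (norm (q k T - q i T)) * inner (p i T) (velG g (p k T) - velG g (p i T)))"
      by (simp add: V_def inner_sum_right)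
    also have "\<dots> \<le> 0"
    proof -
      have "(\<Sum>k\<in>{1..N}. \<psi> (norm (q k T - q i T)) * inner (p i T) (velG g (p k T) - velG g (p i T))) \<le> 0"
      proof (rule sum_nonpos)
        fix k assume k: "k \<in> {1..N}"
        show "\<psi> (norm (q k T - q i T)) * inner (p i T) (velG g (p k T) - velG g (p i T)) \<le> 0"
        proof (rule mult_nonneg_nonpos)
          show "0 \<le> \<psi> (norm (q k T - q i T))" using psi_nn by simp
          show "inner (p i T) (velG g (p k T) - velG g (p i T)) \<le> 0"
            using imax k by (intro velG_max[OF g0 gmono]) auto
        qed
      qed
      moreover have "0 \<le> \<kappa> / real N" using kappa by simp
      ultimately show ?thesis by (rule mult_nonneg_nonpos[rotated])
    qed
    finally show ?thesis .
  qed
  have "2 * inner (p i T) V - \<epsilon> < 0" using Vneg eps by simp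
  from DERIV_neg_dec_left[OF fd this] obtain d where d: "d > 0" "\<forall>h>0. h < d \<longrightarrow> f i T < f i (T - h)" by blast
  define h where "h = min (d/2) T"
  have h: "h > 0" "h < d" "h \<le> T" using d Tpos by (auto simp: h_def)
  then have "f i T < f i (T - h)" using d by auto
  then have "0 \<le> f i (T - h)" using fiT by simp
  then have "T - h \<in> Z" using i h T0 unfolding Z_def by auto
  then have "T \<le> T - h" unfolding T_def by (rule cInf_lower[OF _ Zbdd])
  then show False using h by simp
qed


lemma norm_le_grpnorm:
  fixes x :: "nat \<Rightarrow> 'a::real_normed_vector"
  assumes "finite I" "i \<in> I" "k \<in> I"
  shows "norm (x i - x k) \<le> grpnorm I x"
proof -
  have "(norm (x i - x k))^2 \<le> (\<Sum>j\<in>I. (norm (x i - x j))^2)"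
    using assms by (intro member_le_sum) auto
  also have "\<dots> \<le> (\<Sum>i\<in>I. \<Sum>j\<in>I. (norm (x i - x j))^2)"
    using assms by (intro member_le_sum[of i] sum_nonneg) auto
  finally show ?thesis unfolding grpnorm_def by (intro real_le_rsqrt) 
qed

theorem lemma2p1:
  fixes N l :: nat and \<kappa> :: real and g g' \<psi> :: "real \<Rightarrow> real"
    and q p :: "nat \<Rightarrow> real \<Rightarrow> 'a::euclidean_space"
  assumes N: "N \<ge> 1" and kappa: "\<kappa> > 0" and l: "l \<in> {1..N}"
    and g_deriv: "\<forall>r\<ge>0. (g has_real_derivative g' r) (at r within {0..})"
    and g'_cont: "continuous_on {0..} g'"
    and g0: "g 0 = 0"
    and g'_bounds: "\<forall>b\<ge>0. \<exists>m M. 0 < m \<and> (\<forall>r\<in>{0..b}. m \<le> g' r \<and> g' r \<le> M)"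
    and g_cvx: "convex_on {0<..} g \<or> concave_on {0<..} g"
    and psi_pos: "\<forall>r>0. \<psi> r > 0"
    and psi_bdd: "\<exists>B. \<forall>r>0. \<bar>\<psi> r\<bar> \<le> B"
    and psi_lip: "\<exists>L. \<forall>r>0. \<forall>s>0. \<bar>\<psi> r - \<psi> s\<bar> \<le> L * \<bar>r - s\<bar>"
    and psi_mono: "\<forall>r s. 0 < r \<and> r \<le> s \<longrightarrow> \<psi> s \<le> \<psi> r"
    and psi_0: "(\<psi> \<longlongrightarrow> \<psi> 0) (at_right 0)"
    and q_cont: "\<forall>i\<in>{1..N}. continuous_on {0..} (q i)"
    and p_cont: "\<forall>i\<in>{1..N}. continuous_on {0..} (p i)"
    and q_ode: "\<forall>i\<in>{1..N}. \<forall>t>0. (q i has_vector_derivative velG g (p i t)) (at t)"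
    and p_ode: "\<forall>i\<in>{1..N}. \<forall>t>0. (p i has_vector_derivative
         (\<kappa> / real N) *\<^sub>R (\<Sum>k\<in>{1..N}. \<psi> (norm (q k t - q i t)) *\<^sub>R
            (velG g (p k t) - velG g (p i t)))) (at t)"
  defines "P0M \<equiv> Max ((\<lambda>i. norm (p i 0)) ` {1..N})"
  defines "MG \<equiv> Sup (g' ` {0..P0M})"
    and "mG \<equiv> Inf (g' ` {0..P0M})"
  defines "calM \<equiv> min mG (mG^2 / MG)"
  shows "\<forall>t>0. (l < N \<longrightarrow> bdd_above (dquot \<psi> (qmin N l (\<lambda>i. q i t)))) \<and>
     (\<forall>D. ((\<lambda>s. grpnorm {1..l} (\<lambda>i. p i s)) has_real_derivative D) (at t) \<longrightarrow>
       D \<le> - (\<kappa> * calM * real l / real N) * \<psi> (grpnorm {1..l} (\<lambda>i. q i t))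
                 * grpnorm {1..l} (\<lambda>i. p i t)
            + (2 * \<kappa> * MG * real (N - l) * P0M * Lpsi \<psi> (qmin N l (\<lambda>i. q i t)) / real N)
                 * grpnorm {1..l} (\<lambda>i. q i t)
       \<and> D \<le> - (\<kappa> * calM * real l / real N) * \<psi> (grpnorm {1..l} (\<lambda>i. q i t))
                 * grpnorm {1..l} (\<lambda>i. p i t)
            + (4 * \<kappa> * P0M * MG * real l * real (N - l) / real N)
                 * psimax \<psi> N l (\<lambda>i. q i t))"
proof -
  define I where "I = {1..l}"
  define E where "E = {1..N} - {1..l}"
  have finI: "finite I" and finE: "finite E" by (auto simp: I_def E_def)
  have IN: "I \<subseteq> {1..N}" using l by (auto simp: I_def)
  have cardI: "card I = l" by (simp add: I_def)
  have cardE: "card E = N - l" unfolding E_def using l by (subst card_Diff_subset) auto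
  have splitN: "\<And>f :: nat \<Rightarrow> 'a. (\<Sum>k\<in>{1..N}. f k) = (\<Sum>k\<in>I. f k) + (\<Sum>k\<in>E. f k)"
    using sum.subset_diff[OF IN, of _] unfolding E_def I_def by (simp add: add.commute)
  have fin1: "finite ((\<lambda>i. norm (p i 0)) ` {1..N})" by simp
  have P0M_ge: "\<forall>i\<in>{1..N}. norm (p i 0) \<le> P0M"
    unfolding P0M_def using fin1 by (auto intro: Max_ge)
  have P0M0: "P0M \<ge> 0"
  proof -
    have "1 \<in> {1..N}" using N by simp
    then have "norm (p 1 0) \<le> P0M" using P0M_ge by blast
    then show ?thesis using norm_ge_zero[of "p 1 0"] by linarith
  qed
  obtain m0 M0 where m0: "0 < m0" and m0M0: "\<forall>r\<in>{0..P0M}. m0 \<le> g' r \<and> g' r \<le> M0"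
    using g'_bounds P0M0 by blast
  have ne: "g' ` {0..P0M} \<noteq> {}" using P0M0 by auto
  have bddA: "bdd_above (g' ` {0..P0M})" using m0M0 by (intro bdd_aboveI[where M=M0]) auto
  have bddB: "bdd_below (g' ` {0..P0M})" using m0M0 by (intro bdd_belowI[where m=m0]) auto
  have gB: "\<forall>r\<in>{0..P0M}. mG \<le> g' r \<and> g' r \<le> MG"
    unfolding mG_def MG_def using bddA bddB by (auto intro: cInf_lower cSup_upper)
  have mG_pos: "mG > 0"
  proof -
    have "m0 \<le> mG" unfolding mG_def using ne m0M0 by (intro cInf_greatest) auto
    then show ?thesis using m0 by simp
  qed
  have MG_ge: "mG \<le> MG" using gB P0M0 by fastforce
  have calM_le: "calM \<le> mG" unfolding calM_def by simp
  have gmono: "\<forall>a b. 0 \<le> a \<and> a \<le> b \<longrightarrow> g a \<le> g b"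
  proof (intro allI impI)
    fix a b :: real assume ab: "0 \<le> a \<and> a \<le> b"
    obtain x where x: "x \<in> {a..b}" "g b - g a = g' x * (b - a)"
      using g_mvt[OF g_deriv] ab by blast
    have "0 \<le> b" using ab by simp
    then obtain m1 M1 where m1: "0 < m1" and m1b: "\<forall>r\<in>{0..b}. m1 \<le> g' r \<and> g' r \<le> M1"
      using g'_bounds by blast
    have "x \<in> {0..b}" using x ab by auto
    then have "m1 \<le> g' x" using m1b by blast
    then have "g' x \<ge> 0" using m1 by simp
    then have "0 \<le> g' x * (b - a)" using ab by simp
    then show "g a \<le> g b" using x by linarith
  qed
  have gnn: "\<And>r. 0 \<le> r \<Longrightarrow> 0 \<le> g r"
  proof -
    fix r :: real assume "0 \<le> r"
    then have "g 0 \<le> g r" using gmono by blast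
    then show "0 \<le> g r" using g0 by simp
  qed
  have g_lo: "\<And>a b. 0 \<le> a \<Longrightarrow> a \<le> b \<Longrightarrow> b \<le> P0M \<Longrightarrow> mG * (b - a) \<le> g b - g a"
    using g_bounds[OF g_deriv gB] by blast
  have g_up: "\<And>r. 0 \<le> r \<Longrightarrow> r \<le> P0M \<Longrightarrow> g r \<le> MG * r"
    using g_bounds[OF g_deriv gB, of 0] g0 by fastforce
  have psi_nn: "\<forall>r\<ge>0. \<psi> r \<ge> 0" and psi_anti: "\<forall>r s. 0 \<le> r \<and> r \<le> s \<longrightarrow> \<psi> s \<le> \<psi> r"
    using psi_facts[OF psi_pos psi_mono psi_0] by auto
  obtain L0 where L0: "L0 \<ge> 0" "\<forall>r\<ge>0. \<forall>s\<ge>0. \<bar>\<psi> r - \<psi> s\<bar> \<le> L0 * \<bar>r - s\<bar>"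
    using psi_lip0[OF psi_lip psi_0] by blast
  have pb: "\<forall>t\<ge>0. \<forall>i\<in>{1..N}. norm (p i t) \<le> P0M"
    by (rule max_principle[OF N kappa g0 gmono psi_nn p_cont p_ode P0M_ge])
  have Gb: "\<And>x::'a. norm x \<le> P0M \<Longrightarrow> norm (velG g x) \<le> MG * P0M"
  proof -
    fix x :: 'a assume x: "norm x \<le> P0M"
    have "norm (velG g x) = g (norm x)" using gnn[of "norm x"] g0 by (simp add: norm_velG)
    also have "\<dots> \<le> MG * norm x" using g_up x by simp
    also have "\<dots> \<le> MG * P0M" using x MG_ge mG_pos by (intro mult_left_mono) auto
    finally show "norm (velG g x) \<le> MG * P0M" .
  qed
  have Gmon: "\<And>x y::'a. norm x \<le> P0M \<Longrightarrow> norm y \<le> P0M \<Longrightarrow>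
      mG * (norm (x - y))^2 \<le> inner (x - y) (velG g x - velG g y)"
    by (rule velG_mono[OF g0 _ g_lo]) (use mG_pos in auto)
  show ?thesis
  proof (intro allI impI)
    fix t :: real assume t: "t > 0"
    define pp where "pp i = p i t" for i
    define qq where "qq i = q i t" for i
    define G where "G i = velG g (p i t)" for i
    define c where "c = \<kappa> / real N"
    have c0: "c \<ge> 0" using kappa by (simp add: c_def)
    define w where "w i k = c * \<psi> (norm (q k t - q i t))" for i k
    have w0: "\<And>i k. w i k \<ge> 0" using c0 psi_nn by (simp add: w_def)
    have ppb: "\<And>i. i \<in> {1..N} \<Longrightarrow> norm (pp i) \<le> P0M" using pb t by (simp add: pp_def)
    have Gdiff: "\<And>i k. i \<in> {1..N} \<Longrightarrow> k \<in> {1..N} \<Longrightarrow> norm (G k - G i) \<le> 2 * MG * P0M"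
    proof -
      fix i k assume "i \<in> {1..N}" "k \<in> {1..N}"
      then have "norm (G k) \<le> MG * P0M" "norm (G i) \<le> MG * P0M"
        using Gb ppb by (auto simp: G_def pp_def)
      then show "norm (G k - G i) \<le> 2 * MG * P0M" using norm_triangle_ineq4[of "G k" "G i"] by simp
    qed
    define qm where "qm = qmin N l (\<lambda>i. q i t)"
    have qmin_facts: "qm \<ge> 0 \<and> (\<forall>i\<in>I. \<forall>k\<in>E. qm \<le> norm (q i t - q k t))" if En: "E \<noteq> {}"
    proof -
      let ?A = "{norm (q i t - q j t) | i j. i \<in> {1..l} \<and> j \<in> {1..N} - {1..l}}"
      have finA: "finite ?A" by (rule finite_image_set2) auto
      have memA: "norm (q i t - q k t) \<in> ?A" if "i \<in> I" "k \<in> E" for i k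
        by (intro CollectI exI[of _ i] exI[of _ k]) (use that in \<open>auto simp: I_def E_def\<close>)
      obtain k0 where k0: "k0 \<in> E" using En by blast
      have one: "1 \<in> I" using l by (simp add: I_def)
      have neA: "?A \<noteq> {}" using memA[OF one k0] by blast
      have "qm \<in> ?A" unfolding qm_def qmin_def by (rule Min_in[OF finA neA])
      then have "qm \<ge> 0" by auto
      moreover have "\<forall>i\<in>I. \<forall>k\<in>E. qm \<le> norm (q i t - q k t)"
        unfolding qm_def qmin_def using finA memA by (auto intro!: Min_le)
      ultimately show ?thesis by blast
    qed
    have part1: "l < N \<longrightarrow> bdd_above (dquot \<psi> (qmin N l (\<lambda>i. q i t)))"
    proof
      assume "l < N"
      then have "E \<noteq> {}" unfolding E_def by (auto intro!: exI[of _ N] simp: l)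
      then have "qm \<ge> 0" using qmin_facts by blast
      then show "bdd_above (dquot \<psi> (qmin N l (\<lambda>i. q i t)))"
        using Lpsi_facts(1)[OF L0] by (simp add: qm_def)
    qed
    have part2: "\<forall>D. ((\<lambda>s. grpnorm {1..l} (\<lambda>i. p i s)) has_real_derivative D) (at t) \<longrightarrow>
       D \<le> - (\<kappa> * calM * real l / real N) * \<psi> (grpnorm {1..l} (\<lambda>i. q i t))
                 * grpnorm {1..l} (\<lambda>i. p i t)
            + (2 * \<kappa> * MG * real (N - l) * P0M * Lpsi \<psi> (qmin N l (\<lambda>i. q i t)) / real N)
                 * grpnorm {1..l} (\<lambda>i. q i t)
       \<and> D \<le> - (\<kappa> * calM * real l / real N) * \<psi> (grpnorm {1..l} (\<lambda>i. q i t))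
                 * grpnorm {1..l} (\<lambda>i. p i t)
            + (4 * \<kappa> * P0M * MG * real l * real (N - l) / real N)
                 * psimax \<psi> N l (\<lambda>i. q i t)"
    proof (intro allI impI)
      fix D assume hD: "((\<lambda>s. grpnorm {1..l} (\<lambda>i. p i s)) has_real_derivative D) (at t)"
      define nP where "nP = grpnorm I pp"
      define nQ where "nQ = grpnorm I qq"
      define Lp where "Lp = Lpsi \<psi> qm"
      define pm where "pm = psimax \<psi> N l (\<lambda>i. q i t)"
      define \<psi>Q where "\<psi>Q = \<psi> nQ"
      have nP0: "nP \<ge> 0" and nQ0: "nQ \<ge> 0" by (auto simp: nP_def nQ_def grpnorm_def intro!: sum_nonneg)
      have \<psi>Q0: "\<psi>Q \<ge> 0" using psi_nn nQ0 by (simp add: \<psi>Q_def)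
      have Lp0: "real (card E) * Lp \<ge> 0"
      proof (cases "E = {}")
        case False then show ?thesis using qmin_facts Lpsi_facts(2)[OF L0] by (simp add: Lp_def)
      qed simp
      have pm_ge: "\<And>i k. i \<in> I \<Longrightarrow> k \<in> E \<Longrightarrow> \<psi> (norm (q i t - q k t)) \<le> pm"
      proof -
        fix i k assume ik: "i \<in> I" "k \<in> E"
        let ?B = "{\<psi> (norm (q i t - q j t)) | i j. i \<in> {1..l} \<and> j \<in> {1..N} - {1..l}}"
        have finB: "finite ?B" by (rule finite_image_set2) auto
        have "\<psi> (norm (q i t - q k t)) \<in> ?B"
          by (intro CollectI exI[of _ i] exI[of _ k]) (use ik in \<open>auto simp: I_def E_def\<close>)
        then show "\<psi> (norm (q i t - q k t)) \<le> pm"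
          unfolding pm_def psimax_def using finB by (auto intro!: Max_ge)
      qed
      have pm0: "real (card E) * pm \<ge> 0"
      proof (cases "E = {}")
        case False
        then obtain k where k: "k \<in> E" by blast
        have "1 \<in> I" using l by (simp add: I_def)
        then have "\<psi> (norm (q 1 t - q k t)) \<le> pm" using pm_ge k by blast
        then have "pm \<ge> 0" using psi_nn by (meson norm_ge_zero order_trans)
        then show ?thesis by simp
      qed simp
      define FI where "FI i = (\<Sum>k\<in>I. w i k *\<^sub>R (G k - G i))" for i
      define FE where "FE i = (\<Sum>k\<in>E. w i k *\<^sub>R (G k - G i))" for i
      define V where "V i = (\<kappa> / real N) *\<^sub>R (\<Sum>k\<in>{1..N}. \<psi> (norm (q k t - q i t)) *\<^sub>R
            (velG g (p k t) - velG g (p i t)))" for i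
      have VIE: "V i = FI i + FE i" for i
      proof -
        have "V i = (\<Sum>k\<in>{1..N}. w i k *\<^sub>R (G k - G i))"
          by (simp add: V_def w_def G_def c_def scaleR_sum_right)
        then show ?thesis unfolding FI_def FE_def using splitN[of "\<lambda>k. w i k *\<^sub>R (G k - G i)"] by simp
      qed
      have pd: "\<And>i. i \<in> I \<Longrightarrow> (p i has_vector_derivative V i) (at t)"
        using p_ode t IN by (auto simp: V_def)
      define S where "S s = (\<Sum>i\<in>I. \<Sum>j\<in>I. (norm (p i s - p j s))^2)" for s
      define T where "T = (\<Sum>i\<in>I. \<Sum>j\<in>I. inner (pp i - pp j) (V i - V j))"
      have grpS: "\<And>s. grpnorm {1..l} (\<lambda>i. p i s) = sqrt (S s)" by (simp add: grpnorm_def S_def I_def)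
      have nPS: "nP = sqrt (S t)" by (simp add: nP_def grpnorm_def S_def pp_def)
      have S0: "S t \<ge> 0" by (simp add: S_def sum_nonneg)
      have Sd: "(S has_real_derivative 2 * T) (at t)"
      proof -
        have "(S has_real_derivative (\<Sum>i\<in>I. \<Sum>j\<in>I. 2 * inner (p i t - p j t) (V i - V j))) (at t)"
          unfolding S_def
        proof (intro DERIV_sum)
          fix i j assume i: "i \<in> I" and j: "j \<in> I"
          show "((\<lambda>x. (norm (p i x - p j x))^2) has_real_derivative 2 * inner (p i t - p j t) (V i - V j)) (at t)"
            by (intro deriv_norm_sq has_vector_derivative_diff pd i j)
        qed
        then show ?thesis by (simp add: T_def pp_def sum_distrib_left)
      qed
      have Tsplit: "T = (\<Sum>i\<in>I. \<Sum>j\<in>I. inner (pp i - pp j) (FI i - FI j)) + (\<Sum>i\<in>I. \<Sum>j\<in>I. inner (pp i - pp j) (FE i - FE j))"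
      proof -
        have pw: "V i - V j = (FI i - FI j) + (FE i - FE j)" for i j by (simp add: VIE algebra_simps)
        show ?thesis by (simp only: T_def pw inner_add_right sum.distrib)
      qed
      have Sp: "S t = (\<Sum>i\<in>I. \<Sum>j\<in>I. (norm (pp i - pp j))^2)" by (simp add: S_def pp_def)
      have Tint: "(\<Sum>i\<in>I. \<Sum>j\<in>I. inner (pp i - pp j) (FI i - FI j)) \<le> - (real l * (c * \<psi>Q) * mG) * S t"
        unfolding Sp FI_def cardI[symmetric]
      proof (rule internal_bound[OF finI])
        show "\<forall>i\<in>I. \<forall>k\<in>I. w i k = w k i" by (simp add: w_def norm_minus_commute)
        show "\<forall>i\<in>I. \<forall>k\<in>I. c * \<psi>Q \<le> w i k"
        proof (intro ballI)
          fix i k assume "i \<in> I" "k \<in> I"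
          then have "norm (q k t - q i t) \<le> nQ" unfolding nQ_def qq_def by (intro norm_le_grpnorm finI)
          then have "\<psi> nQ \<le> \<psi> (norm (q k t - q i t))" using psi_anti by auto
          then show "c * \<psi>Q \<le> w i k" unfolding w_def \<psi>Q_def using c0 by (intro mult_left_mono)
        qed
        show "0 \<le> c * \<psi>Q" using c0 \<psi>Q0 by simp
        show "0 \<le> mG" using mG_pos by simp
        show "\<forall>i\<in>I. \<forall>k\<in>I. mG * (norm (pp i - pp k))^2 \<le> inner (pp i - pp k) (G i - G k)"
          using Gmon ppb IN unfolding G_def pp_def by blast
      qed
      have Text1: "(\<Sum>i\<in>I. \<Sum>j\<in>I. inner (pp i - pp j) (FE i - FE j)) \<le> (real (card E) * Lp) * (c * (2 * MG * P0M)) * (nP * nQ)"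
      proof -
        have "(\<Sum>i\<in>I. \<Sum>j\<in>I. inner (pp i - pp j) (FE i - FE j)) \<le>
              (\<Sum>i\<in>I. \<Sum>j\<in>I. real (card E) * (c * Lp * norm (qq i - qq j) * (2 * MG * P0M)) * norm (pp i - pp j))"
        proof (intro sum_mono)
          fix i j assume i: "i \<in> I" and j: "j \<in> I"
          show "inner (pp i - pp j) (FE i - FE j) \<le> real (card E) * (c * Lp * norm (qq i - qq j) * (2 * MG * P0M)) * norm (pp i - pp j)"
            unfolding FE_def
          proof (rule ext_pair1[OF finE])
            show "\<forall>k\<in>E. 0 \<le> w j k" using w0 by simp
            show "0 \<le> inner (pp i - pp j) (G i - G j)"
            proof -
              have iN: "i \<in> {1..N}" and jN: "j \<in> {1..N}" using i j IN by auto
              have "mG * (norm (pp i - pp j))^2 \<le> inner (pp i - pp j) (G i - G j)"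
                unfolding G_def pp_def by (rule Gmon) (use ppb[OF iN] ppb[OF jN] in \<open>auto simp: pp_def\<close>)
              moreover have "0 \<le> mG * (norm (pp i - pp j))^2" using mG_pos by simp
              ultimately show ?thesis by linarith
            qed
            show "\<forall>k\<in>E. \<bar>w i k - w j k\<bar> * norm (G k - G i) \<le> c * Lp * norm (qq i - qq j) * (2 * MG * P0M)"
            proof
              fix k assume k: "k \<in> E"
              then have En: "E \<noteq> {}" by auto
              have kN: "k \<in> {1..N}" using k by (auto simp: E_def)
              have qa: "qm \<le> norm (q k t - q i t)" "qm \<le> norm (q k t - q j t)"
                using qmin_facts[OF En] i j k by (auto simp: norm_minus_commute)
              have "\<bar>\<psi> (norm (q k t - q i t)) - \<psi> (norm (q k t - q j t))\<bar> \<le> Lp * \<bar>norm (q k t - q i t) - norm (q k t - q j t)\<bar>"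
                unfolding Lp_def using Lpsi_facts(3)[OF L0] qmin_facts[OF En] qa by blast
              also have "\<dots> \<le> Lp * norm (qq i - qq j)"
              proof (rule mult_left_mono)
                show "0 \<le> Lp" using qmin_facts[OF En] Lpsi_facts(2)[OF L0] by (simp add: Lp_def)
                have "\<bar>norm (q k t - q i t) - norm (q k t - q j t)\<bar> \<le> norm ((q k t - q i t) - (q k t - q j t))"
                  by (rule norm_triangle_ineq3)
                then show "\<bar>norm (q k t - q i t) - norm (q k t - q j t)\<bar> \<le> norm (qq i - qq j)"
                  by (simp add: qq_def norm_minus_commute)
              qed
              finally have a: "\<bar>w i k - w j k\<bar> \<le> c * (Lp * norm (qq i - qq j))"
                using c0 unfolding w_def by (simp add: right_diff_distrib[symmetric] abs_mult mult_left_mono)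
              have b: "norm (G k - G i) \<le> 2 * MG * P0M" using Gdiff kN i IN by auto
              have Lpn: "0 \<le> Lp" using qmin_facts[OF En] Lpsi_facts(2)[OF L0] by (simp add: Lp_def)
              have "\<bar>w i k - w j k\<bar> * norm (G k - G i) \<le> (c * (Lp * norm (qq i - qq j))) * (2 * MG * P0M)"
                by (rule mult_mono[OF a b]) (use c0 Lpn in auto)
              then show "\<bar>w i k - w j k\<bar> * norm (G k - G i) \<le> c * Lp * norm (qq i - qq j) * (2 * MG * P0M)"
                by (simp add: mult.assoc)
            qed
          qed
        qed
        also have "\<dots> = (real (card E) * Lp) * (c * (2 * MG * P0M)) * (\<Sum>i\<in>I. \<Sum>j\<in>I. norm (pp i - pp j) * norm (qq i - qq j))"
          by (simp add: sum_distrib_left mult_ac)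
        also have "\<dots> \<le> (real (card E) * Lp) * (c * (2 * MG * P0M)) * (nP * nQ)"
          unfolding nP_def nQ_def
          by (intro mult_left_mono cs_double finI mult_nonneg_nonneg Lp0 c0) (use MG_ge mG_pos P0M0 in auto)
        finally show ?thesis .
      qed
      have Text2: "(\<Sum>i\<in>I. \<Sum>j\<in>I. inner (pp i - pp j) (FE i - FE j)) \<le> 2 * (real (card E) * pm) * (c * (2 * MG * P0M)) * (real l * nP)"
      proof -
        have "(\<Sum>i\<in>I. \<Sum>j\<in>I. inner (pp i - pp j) (FE i - FE j)) = 2 * (\<Sum>i\<in>I. \<Sum>j\<in>I. inner (pp i - pp j) (FE i))"
          by (rule swap_identity)
        also have "(\<Sum>i\<in>I. \<Sum>j\<in>I. inner (pp i - pp j) (FE i)) \<le>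
              (\<Sum>i\<in>I. \<Sum>j\<in>I. real (card E) * (c * pm * (2 * MG * P0M)) * norm (pp i - pp j))"
        proof (intro sum_mono)
          fix i j assume i: "i \<in> I" and j: "j \<in> I"
          show "inner (pp i - pp j) (FE i) \<le> real (card E) * (c * pm * (2 * MG * P0M)) * norm (pp i - pp j)"
            unfolding FE_def
          proof (rule ext_pair2[OF finE], intro ballI)
            fix k assume k: "k \<in> E"
            have kN: "k \<in> {1..N}" using k by (auto simp: E_def)
            have a: "\<bar>w i k\<bar> \<le> c * pm"
              using pm_ge[OF i k] w0[of i k] c0 unfolding w_def
              by (simp add: norm_minus_commute mult_left_mono)
            have b: "norm (G k - G i) \<le> 2 * MG * P0M" using Gdiff kN i IN by auto
            have "0 \<le> \<psi> (norm (q i t - q k t))" using psi_nn by simp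
            then have pmn: "0 \<le> pm" using pm_ge[OF i k] by linarith
            have "\<bar>w i k\<bar> * norm (G k - G i) \<le> (c * pm) * (2 * MG * P0M)"
              by (rule mult_mono[OF a b]) (use c0 pmn in auto)
            then show "\<bar>w i k\<bar> * norm (G k - G i) \<le> c * pm * (2 * MG * P0M)" by simp
          qed
        qed
        also have "\<dots> = (real (card E) * pm) * (c * (2 * MG * P0M)) * (\<Sum>i\<in>I. \<Sum>j\<in>I. norm (pp i - pp j))"
          by (simp add: sum_distrib_left mult_ac)
        also have "\<dots> \<le> (real (card E) * pm) * (c * (2 * MG * P0M)) * (real l * nP)"
          unfolding nP_def cardI[symmetric]
          by (intro mult_left_mono sum_norm_double finI mult_nonneg_nonneg pm0 c0) (use MG_ge mG_pos P0M0 in auto)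
        finally show ?thesis by simp
      qed
      define A0 where "A0 = real l * (c * \<psi>Q) * mG"
      define B1 where "B1 = (real (card E) * Lp) * (c * (2 * MG * P0M))"
      define B2 where "B2 = 2 * (real (card E) * pm) * (c * (2 * MG * P0M)) * real l"
      have B1_0: "B1 \<ge> 0" unfolding B1_def using Lp0 c0 MG_ge mG_pos P0M0 by simp
      have Y0: "0 \<le> c * (2 * MG * P0M)" using c0 MG_ge mG_pos P0M0 by simp
      have "0 \<le> (2 * (real (card E) * pm)) * (c * (2 * MG * P0M))"
        by (rule mult_nonneg_nonneg) (use pm0 Y0 in auto)
      then have B2_0: "B2 \<ge> 0" unfolding B2_def by (rule mult_nonneg_nonneg) simp
      have A0_ge: "(\<kappa> * calM * real l / real N) * \<psi>Q \<le> A0"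
      proof -
        have "(\<kappa> * calM * real l / real N) * \<psi>Q = real l * (c * \<psi>Q) * calM" by (simp add: c_def)
        also have "\<dots> \<le> A0" unfolding A0_def using calM_le c0 \<psi>Q0 by (intro mult_left_mono) auto
        finally show ?thesis .
      qed
      have SnP: "S t = nP^2" using S0 nPS by simp
      have E1: "T \<le> - A0 * nP^2 + B1 * (nP * nQ)" using Tsplit Tint Text1 SnP by (simp add: A0_def B1_def)
      have E2: "T \<le> - A0 * nP^2 + B2 * nP" using Tsplit Tint Text2 SnP by (simp add: A0_def B2_def mult_ac)
      have goalform1: "(2 * \<kappa> * MG * real (N - l) * P0M * Lpsi \<psi> (qmin N l (\<lambda>i. q i t)) / real N) = B1"
        by (simp add: B1_def cardE c_def Lp_def qm_def)
      have goalform2: "(4 * \<kappa> * P0M * MG * real l * real (N - l) / real N) * psimax \<psi> N l (\<lambda>i. q i t) = B2"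
        by (simp add: B2_def cardE c_def pm_def)
      have Dbound: "D \<le> - A0 * nP + B1 * nQ \<and> D \<le> - A0 * nP + B2"
      proof (cases "S t = 0")
        case True
        then have nPz: "nP = 0" using nPS by simp
        have "D = 0"
        proof (rule DERIV_local_min[OF hD, of 1])
          show "\<forall>y. \<bar>t - y\<bar> < 1 \<longrightarrow> grpnorm {1..l} (\<lambda>i. p i t) \<le> grpnorm {1..l} (\<lambda>i. p i y)"
          proof (intro allI impI)
            fix y :: real
            have "S y \<ge> 0" by (simp add: S_def sum_nonneg)
            then show "grpnorm {1..l} (\<lambda>i. p i t) \<le> grpnorm {1..l} (\<lambda>i. p i y)"
              unfolding grpS using True by simp
          qed
        qed simp
        then show ?thesis using nPz B1_0 B2_0 nQ0 by simp
      next
        case False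
        then have Sp: "S t > 0" using S0 by simp
        have "((\<lambda>s. sqrt (S s)) has_real_derivative (inverse (sqrt (S t)) / 2) * (2 * T)) (at t)"
          by (rule DERIV_chain2[OF DERIV_real_sqrt[OF Sp] Sd])
        then have "((\<lambda>s. grpnorm {1..l} (\<lambda>i. p i s)) has_real_derivative (inverse (sqrt (S t)) / 2) * (2 * T)) (at t)"
          unfolding grpS .
        then have "D = (inverse (sqrt (S t)) / 2) * (2 * T)" using hD DERIV_unique by blast
        then have DT: "D = T / nP" using nPS by (simp add: field_simps)
        have nPp: "nP > 0" using Sp nPS by simp
        have "D * nP = T" using DT nPp by simp
        then have "D * nP \<le> (- A0 * nP + B1 * nQ) * nP \<and> D * nP \<le> (- A0 * nP + B2) * nP"
          using E1 E2 by (simp add: power2_eq_square algebra_simps)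
        then show ?thesis using nPp by (meson mult_le_cancel_right_pos)
      qed
      have "- A0 * nP \<le> - (\<kappa> * calM * real l / real N) * \<psi>Q * nP"
      proof -
        have "(\<kappa> * calM * real l / real N) * \<psi>Q * nP \<le> A0 * nP"
          by (rule mult_right_mono[OF A0_ge nP0])
        then show ?thesis by linarith
      qed
      moreover have e1: "nP = grpnorm {1..l} (\<lambda>i. p i t)" by (simp add: nP_def I_def pp_def[abs_def])
      moreover have e2: "nQ = grpnorm {1..l} (\<lambda>i. q i t)" by (simp add: nQ_def I_def qq_def[abs_def])
      ultimately show "D \<le> - (\<kappa> * calM * real l / real N) * \<psi> (grpnorm {1..l} (\<lambda>i. q i t))
                 * grpnorm {1..l} (\<lambda>i. p i t)
            + (2 * \<kappa> * MG * real (N - l) * P0M * Lpsi \<psi> (qmin N l (\<lambda>i. q i t)) / real N)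
                 * grpnorm {1..l} (\<lambda>i. q i t)
       \<and> D \<le> - (\<kappa> * calM * real l / real N) * \<psi> (grpnorm {1..l} (\<lambda>i. q i t))
                 * grpnorm {1..l} (\<lambda>i. p i t)
            + (4 * \<kappa> * P0M * MG * real l * real (N - l) / real N)
                 * psimax \<psi> N l (\<lambda>i. q i t)"
        unfolding goalform1 goalform2 e1[symmetric] e2[symmetric] \<psi>Q_def[symmetric]
        using Dbound by linarith
    qed
    show "(l < N \<longrightarrow> bdd_above (dquot \<psi> (qmin N l (\<lambda>i. q i t)))) \<and>
     (\<forall>D. ((\<lambda>s. grpnorm {1..l} (\<lambda>i. p i s)) has_real_derivative D) (at t) \<longrightarrow>
       D \<le> - (\<kappa> * calM * real l / real N) * \<psi> (grpnorm {1..l} (\<lambda>i. q i t))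
                 * grpnorm {1..l} (\<lambda>i. p i t)
            + (2 * \<kappa> * MG * real (N - l) * P0M * Lpsi \<psi> (qmin N l (\<lambda>i. q i t)) / real N)
                 * grpnorm {1..l} (\<lambda>i. q i t)
       \<and> D \<le> - (\<kappa> * calM * real l / real N) * \<psi> (grpnorm {1..l} (\<lambda>i. q i t))
                 * grpnorm {1..l} (\<lambda>i. p i t)
            + (4 * \<kappa> * P0M * MG * real l * real (N - l) / real N)
                 * psimax \<psi> N l (\<lambda>i. q i t))"
      using part1 part2 by blast
  qed
qed

end
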